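(* Let $(M_1,f_1,g_1)$ and $(M_2,f_2,g_2)$ be $(m,n)$-hypermodules over a commutative Krasner $(m,n)$-hyperring $(R,f',g')$ with scalar identity $1$, let $h:M_1\to M_2$ be an epimorphism, and let $\phi_1:\mathcal{SH}(M_1)\to\mathcal{SH}(M_1)\cup\{\varnothing\}$ and $\phi_2:\mathcal{SH}(M_2)\to\mathcal{SH}(M_2)\cup\{\varnothing\}$ be functions. Then: (1) if $Q_2$ is an $n$-ary $\phi_2$-classical prime subhypermodule of $M_2$ with $\phi_1(h^{-1}(Q_2))=h^{-1}(\phi_2(Q_2))$, then $h^{-1}(Q_2)$ is an $n$-ary $\phi_1$-classical prime subhypermodule of $M_1$; (2) if $Q_1$ is an $n$-ary $\phi_1$-classical prime subhypermodule of $M_1$ with $\mathrm{Ker}(h)\subseteq Q_1$ and $\phi_2(h(Q_1))=h(\phi_1(Q_1))$, then $h(Q_1)$ is an $n$-ary $\phi_2$-classical prime subhypermodule of $M_2$.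
   Context: A commutative Krasner $(m,n)$-hyperring with scalar identity $1$ is a triple $(R,f',g')$ where $(R,f')$ is a canonical $m$-ary hypergroup with zero $0$, $(R,g')$ is a commutative $n$-ary semigroup, $g'$ is distributive over $f'$, $0$ is a zero element for $g'$, and $g'(x,1^{(n-1)})=x$. Notation: $x_i^j$ denotes $x_i,\dots,x_j$ and $x^{(k)}$ denotes $x$ repeated $k$ times. An $(m,n)$-hypermodule over $R$ is a triple $(M,f,g)$ with $(M,f)$ a canonical $m$-ary hypergroup with zero $0$ and $g:R^{n-1}\times M\to P^*(M)$ satisfying: $g(r_1^{n-1},f(x_1^m))=f(g(r_1^{n-1},x_1),\dots,g(r_1^{n-1},x_m))$; $g(r_1^{i-1},f'(s_1^m),r_{i+1}^{n-1},x)=f(g(r_1^{i-1},s_1,r_{i+1}^{n-1},x),\dots,g(r_1^{i-1},s_m,r_{i+1}^{n-1},x))$; $g(r_1^{i-1},g'(r_i^{i+n-1}),r_{i+n}^{2n-2},x)=g(r_1^{n-1},g(r_n^{2n-2},x))$; $g(r_1^{i-1},0,r_{i+1}^{n-1},x)=\{0\}$; moreover $g(1^{(n-1)},a)=\{a\}$. A subhypermodule is a nonempty $N\subseteq M$ with $(N,f)$ an $m$-ary subhypergroup and $g(R^{(n-1)},N)\subseteq N$; $\mathcal{SH}(M)$ is the set of subhypermodules of $M$. Given $\phi:\mathcal{SH}(M)\to\mathcal{SH}(M)\cup\{\varnothing\}$, a proper subhypermodule $Q$ of $M$ is $n$-ary $\phi$-classical prime if $g(r_1^{n-1},a)\subseteq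 Q\setminus\phi(Q)$ ($r_i\in R$, $a\in M$) implies $g(r_i,1^{(n-2)},a)\subseteq Q$ for some $1\le i\le n-1$. A homomorphism $h:M_1\to M_2$ satisfies $h(f_1(a_1^m))=f_2(h(a_1),\dots,h(a_m))$ and $h(g_1(r_1^{n-1},a))=g_2(r_1^{n-1},h(a))$; an epimorphism is a surjective homomorphism; $\mathrm{Ker}(h)=\{a\in M_1:h(a)=0\}$. *)

theory Defs
  imports Main "HOL-Library.Multiset"
begin

text \<open>Hyperoperations of arity k are modelled as functions on lists (applied to lists
of length k) with values in sets; the underlying sets are whole types.\<close>

definition sgl :: "'a list \<Rightarrow> 'a set list" where
  "sgl xs = map (\<lambda>x. {x}) xs"

definition hlift :: "('a list \<Rightarrow> 'a set) \<Rightarrow> 'a set list \<Rightarrow> 'a set" where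
  "hlift f As = \<Union> {f xs | xs. list_all2 (\<in>) xs As}"

definition nary_hyperop :: "nat \<Rightarrow> ('a list \<Rightarrow> 'a set) \<Rightarrow> bool" where
  "nary_hyperop m f \<longleftrightarrow> (\<forall>xs. length xs = m \<longrightarrow> f xs \<noteq> {})"

definition nary_hassoc :: "nat \<Rightarrow> ('a list \<Rightarrow> 'a set) \<Rightarrow> bool" where
  "nary_hassoc m f \<longleftrightarrow> (\<forall>xs i j. length xs = 2*m - 1 \<longrightarrow> i < m \<longrightarrow> j < m \<longrightarrow>
      hlift f (sgl (take i xs) @ [f (take m (drop i xs))] @ sgl (drop (i+m) xs)) =
      hlift f (sgl (take j xs) @ [f (take m (drop j xs))] @ sgl (drop (j+m) xs)))"

definition nary_reproducible :: "nat \<Rightarrow> ('a list \<Rightarrow> 'a set) \<Rightarrow> 'a set \<Rightarrow> bool" where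
  "nary_reproducible m f H \<longleftrightarrow> (\<forall>xs i. length xs = m \<longrightarrow> set xs \<subseteq> H \<longrightarrow> i < m \<longrightarrow>
      hlift f ((sgl xs)[i := H]) = H)"

definition nary_hypergroup :: "nat \<Rightarrow> ('a list \<Rightarrow> 'a set) \<Rightarrow> bool" where
  "nary_hypergroup m f \<longleftrightarrow> nary_hyperop m f \<and> nary_hassoc m f \<and> nary_reproducible m f UNIV"

definition nary_hcomm :: "nat \<Rightarrow> ('a list \<Rightarrow> 'a set) \<Rightarrow> bool" where
  "nary_hcomm m f \<longleftrightarrow> (\<forall>xs ys. length xs = m \<longrightarrow> mset xs = mset ys \<longrightarrow> f xs = f ys)"

definition hscalar_identity :: "nat \<Rightarrow> ('a list \<Rightarrow> 'a set) \<Rightarrow> 'a \<Rightarrow> bool" where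
  "hscalar_identity m f e \<longleftrightarrow> (\<forall>x. f (x # replicate (m-1) e) = {x})"

definition hinv :: "nat \<Rightarrow> ('a list \<Rightarrow> 'a set) \<Rightarrow> 'a \<Rightarrow> 'a \<Rightarrow> 'a" where
  "hinv m f z x = (THE y. z \<in> f (x # y # replicate (m-2) z))"

definition canonical_hypergroup :: "nat \<Rightarrow> ('a list \<Rightarrow> 'a set) \<Rightarrow> 'a \<Rightarrow> bool" where
  "canonical_hypergroup m f z \<longleftrightarrow>
     nary_hypergroup m f \<and> nary_hcomm m f \<and>
     hscalar_identity m f z \<and> (\<forall>e. hscalar_identity m f e \<longrightarrow> e = z) \<and>
     (\<forall>x. \<exists>!y. z \<in> f (x # y # replicate (m-2) z)) \<and>
     (\<forall>x xs i. length xs = m \<longrightarrow> x \<in> f xs \<longrightarrow> i < m \<longrightarrow>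
        xs ! i \<in> f (x # map (hinv m f z) (take i xs @ drop (Suc i) xs)))"

definition nary_semigroup :: "nat \<Rightarrow> ('a list \<Rightarrow> 'a) \<Rightarrow> bool" where
  "nary_semigroup n g \<longleftrightarrow> (\<forall>xs i j. length xs = 2*n - 1 \<longrightarrow> i < n \<longrightarrow> j < n \<longrightarrow>
      g (take i xs @ [g (take n (drop i xs))] @ drop (i+n) xs) =
      g (take j xs @ [g (take n (drop j xs))] @ drop (j+n) xs))"

definition nary_comm :: "nat \<Rightarrow> ('a list \<Rightarrow> 'a) \<Rightarrow> bool" where
  "nary_comm n g \<longleftrightarrow> (\<forall>xs ys. length xs = n \<longrightarrow> mset xs = mset ys \<longrightarrow> g xs = g ys)"

definition krasner_hyperring ::
  "nat \<Rightarrow> nat \<Rightarrow> ('r list \<Rightarrow> 'r set) \<Rightarrow> ('r list \<Rightarrow> 'r) \<Rightarrow> 'r \<Rightarrow> 'r \<Rightarrow> bool" where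
  "krasner_hyperring m n f' g' z one \<longleftrightarrow>
     canonical_hypergroup m f' z \<and> nary_semigroup n g' \<and> nary_comm n g' \<and>
     (\<forall>xs ys i. length xs = n \<longrightarrow> length ys = m \<longrightarrow> i < n \<longrightarrow>
        (\<Union>y\<in>f' ys. {g' (xs[i := y])}) = hlift f' (map (\<lambda>y. {g' (xs[i := y])}) ys)) \<and>
     (\<forall>xs i. length xs = n \<longrightarrow> i < n \<longrightarrow> g' (xs[i := z]) = z) \<and>
     (\<forall>x. g' (x # replicate (n-1) one) = x)"

definition hypermodule ::
  "nat \<Rightarrow> nat \<Rightarrow> ('r list \<Rightarrow> 'r set) \<Rightarrow> ('r list \<Rightarrow> 'r) \<Rightarrow> 'r \<Rightarrow> 'r \<Rightarrow>
   ('a list \<Rightarrow> 'a set) \<Rightarrow> ('r list \<Rightarrow> 'a \<Rightarrow> 'a set) \<Rightarrow> 'a \<Rightarrow> bool" where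
  "hypermodule m n f' g' z' one f g z \<longleftrightarrow>
     canonical_hypergroup m f z \<and>
     (\<forall>rs x. length rs = n - 1 \<longrightarrow> g rs x \<noteq> {}) \<and>
     (\<forall>rs xs. length rs = n - 1 \<longrightarrow> length xs = m \<longrightarrow>
        (\<Union>y\<in>f xs. g rs y) = hlift f (map (g rs) xs)) \<and>
     (\<forall>rs ss i x. length rs = n - 1 \<longrightarrow> length ss = m \<longrightarrow> i < n - 1 \<longrightarrow>
        (\<Union>s\<in>f' ss. g (rs[i := s]) x) = hlift f (map (\<lambda>s. g (rs[i := s]) x) ss)) \<and>
     (\<forall>rs i x. length rs = 2*n - 2 \<longrightarrow> i < n - 1 \<longrightarrow>
        g (take i rs @ [g' (take n (drop i rs))] @ drop (i+n) rs) x =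
        (\<Union>y\<in>g (drop (n-1) rs) x. g (take (n-1) rs) y)) \<and>
     (\<forall>rs i x. length rs = n - 1 \<longrightarrow> i < n - 1 \<longrightarrow> g (rs[i := z']) x = {z}) \<and>
     (\<forall>a. g (replicate (n-1) one) a = {a})"

definition subhypermodule ::
  "nat \<Rightarrow> nat \<Rightarrow> ('a list \<Rightarrow> 'a set) \<Rightarrow> ('r list \<Rightarrow> 'a \<Rightarrow> 'a set) \<Rightarrow> 'a set \<Rightarrow> bool" where
  "subhypermodule m n f g N \<longleftrightarrow> N \<noteq> {} \<and>
     (\<forall>xs. length xs = m \<longrightarrow> set xs \<subseteq> N \<longrightarrow> f xs \<subseteq> N) \<and>
     nary_reproducible m f N \<and>
     (\<forall>rs a. length rs = n - 1 \<longrightarrow> a \<in> N \<longrightarrow> g rs a \<subseteq> N)"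

definition phi_function ::
  "nat \<Rightarrow> nat \<Rightarrow> ('a list \<Rightarrow> 'a set) \<Rightarrow> ('r list \<Rightarrow> 'a \<Rightarrow> 'a set) \<Rightarrow> ('a set \<Rightarrow> 'a set) \<Rightarrow> bool" where
  "phi_function m n f g \<phi> \<longleftrightarrow>
     (\<forall>N. subhypermodule m n f g N \<longrightarrow> subhypermodule m n f g (\<phi> N) \<or> \<phi> N = {})"

definition phi_classical_prime ::
  "nat \<Rightarrow> nat \<Rightarrow> 'r \<Rightarrow> ('a list \<Rightarrow> 'a set) \<Rightarrow> ('r list \<Rightarrow> 'a \<Rightarrow> 'a set) \<Rightarrow>
   ('a set \<Rightarrow> 'a set) \<Rightarrow> 'a set \<Rightarrow> bool" where
  "phi_classical_prime m n one f g \<phi> Q \<longleftrightarrow>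
     subhypermodule m n f g Q \<and> Q \<noteq> UNIV \<and>
     (\<forall>rs a. length rs = n - 1 \<longrightarrow> g rs a \<subseteq> Q - \<phi> Q \<longrightarrow>
        (\<exists>i < n - 1. g ((rs ! i) # replicate (n-2) one) a \<subseteq> Q))"

definition hm_homomorphism ::
  "nat \<Rightarrow> nat \<Rightarrow> ('a list \<Rightarrow> 'a set) \<Rightarrow> ('r list \<Rightarrow> 'a \<Rightarrow> 'a set) \<Rightarrow>
   ('b list \<Rightarrow> 'b set) \<Rightarrow> ('r list \<Rightarrow> 'b \<Rightarrow> 'b set) \<Rightarrow> ('a \<Rightarrow> 'b) \<Rightarrow> bool" where
  "hm_homomorphism m n f1 g1 f2 g2 h \<longleftrightarrow>
     (\<forall>xs. length xs = m \<longrightarrow> h ` f1 xs = f2 (map h xs)) \<and>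
     (\<forall>rs a. length rs = n - 1 \<longrightarrow> h ` g1 rs a = g2 rs (h a))"

definition hm_epimorphism ::
  "nat \<Rightarrow> nat \<Rightarrow> ('a list \<Rightarrow> 'a set) \<Rightarrow> ('r list \<Rightarrow> 'a \<Rightarrow> 'a set) \<Rightarrow>
   ('b list \<Rightarrow> 'b set) \<Rightarrow> ('r list \<Rightarrow> 'b \<Rightarrow> 'b set) \<Rightarrow> ('a \<Rightarrow> 'b) \<Rightarrow> bool" where
  "hm_epimorphism m n f1 g1 f2 g2 h \<longleftrightarrow> hm_homomorphism m n f1 g1 f2 g2 h \<and> surj h"

definition Ker :: "('a \<Rightarrow> 'b) \<Rightarrow> 'b \<Rightarrow> 'a set" where
  "Ker h z = {a. h a = z}"

end

theory Submission imports Defs begin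

lemma la_sgl_upd:
  assumes "i < length xs"
  shows "list_all2 (\<in>) ys ((sgl xs)[i:=A]) \<longleftrightarrow> (\<exists>y\<in>A. ys = xs[i:=y])"
proof
  assume H: "list_all2 (\<in>) ys ((sgl xs)[i:=A])"
  hence L: "length ys = length xs" by (simp add: list_all2_conv_all_nth sgl_def)
  have "ys = xs[i:=ys!i]"
  proof (rule nth_equalityI)
    show "length ys = length (xs[i:=ys!i])" using L by simp
    fix j assume "j < length ys"
    thus "ys ! j = xs[i := ys ! i] ! j" using H L assms
      by (cases "j = i") (auto simp: list_all2_conv_all_nth sgl_def nth_list_update)
  qed
  moreover have "ys!i \<in> A" using H L assms by (auto simp: list_all2_conv_all_nth sgl_def)
  ultimately show "\<exists>y\<in>A. ys = xs[i:=y]" by blast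
next
  assume "\<exists>y\<in>A. ys = xs[i:=y]"
  then obtain y where "y \<in> A" "ys = xs[i:=y]" by blast
  thus "list_all2 (\<in>) ys ((sgl xs)[i:=A])" using assms
    by (auto simp: list_all2_conv_all_nth sgl_def nth_list_update)
qed

lemma hlift_upd:
  assumes "i < length xs"
  shows "a \<in> hlift f ((sgl xs)[i:=A]) \<longleftrightarrow> (\<exists>y\<in>A. a \<in> f (xs[i:=y]))"
proof -
  have "a \<in> hlift f As \<longleftrightarrow> (\<exists>ys. list_all2 (\<in>) ys As \<and> a \<in> f ys)" for As
    unfolding hlift_def by auto
  thus ?thesis using la_sgl_upd[OF assms] by auto
qed

lemma cancel:
  assumes "canonical_hypergroup m f z" "length ws = m" "i < m" "a \<in> f ws" "a \<in> N"
    "set (take i ws @ drop (Suc i) ws) \<subseteq> N"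
    "\<forall>xs. length xs = m \<longrightarrow> set xs \<subseteq> N \<longrightarrow> f xs \<subseteq> N"
    "\<forall>x\<in>N. hinv m f z x \<in> N"
  shows "ws ! i \<in> N"
proof -
  have "ws ! i \<in> f (a # map (hinv m f z) (take i ws @ drop (Suc i) ws))"
    using assms(1-4) unfolding canonical_hypergroup_def by blast
  moreover have "length (a # map (hinv m f z) (take i ws @ drop (Suc i) ws)) = m"
    using assms(2,3) by simp
  moreover have "set (a # map (hinv m f z) (take i ws @ drop (Suc i) ws)) \<subseteq> N"
    using assms(5,6,8) by auto
  ultimately show ?thesis using assms(7) by blast
qed

lemma inv_prop:
  assumes "canonical_hypergroup m f z"
  shows "z \<in> f (x # hinv m f z x # replicate (m-2) z)"
    and "z \<in> f (x # y # replicate (m-2) z) \<Longrightarrow> y = hinv m f z x"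
proof -
  have "\<exists>!y. z \<in> f (x # y # replicate (m-2) z)" using assms unfolding canonical_hypergroup_def by blast
  hence *: "z \<in> f (x # (THE y. z \<in> f (x # y # replicate (m-2) z)) # replicate (m-2) z)"
    by (rule theI')
  thus "z \<in> f (x # hinv m f z x # replicate (m-2) z)" unfolding hinv_def .
  show "z \<in> f (x # y # replicate (m-2) z) \<Longrightarrow> y = hinv m f z x"
    using \<open>\<exists>!y. _\<close> * unfolding hinv_def by blast
qed

lemma g_zero:
  assumes "hypermodule m n f' g' z' one f g z" "n \<ge> 2"
  shows "g (replicate (n-1) z') x = {z}"
proof -
  have "g ((replicate (n-1) z')[0 := z']) x = {z}"
  proof -
    have "length (replicate (n-1) z') = n - 1" "0 < n - 1" using assms(2) by auto
    thus ?thesis using assms(1) unfolding hypermodule_def by blast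
  qed
  moreover have "(replicate (n-1) z')[0:=z'] = replicate (n-1) z'"
    using list_update_id[of "replicate (n-1) z'" 0] assms(2) by simp
  ultimately show ?thesis by simp
qed

lemma zero_in:
  assumes "hypermodule m n f' g' z' one f g z" "n \<ge> 2" "subhypermodule m n f g N"
  shows "z \<in> N"
proof -
  obtain x where "x \<in> N" using assms(3) unfolding subhypermodule_def by blast
  thus ?thesis using assms g_zero[OF assms(1,2)] unfolding subhypermodule_def
    by (metis length_replicate insert_subset)
qed

lemma inv_in:
  assumes "hypermodule m n f' g' z' one f g z" "n \<ge> 2" "m \<ge> 2" "subhypermodule m n f g N" "x \<in> N"
  shows "hinv m f z x \<in> N"
proof -
  have zN: "z \<in> N" by (rule zero_in[OF assms(1,2,4)])
  have can: "canonical_hypergroup m f z" using assms(1) unfolding hypermodule_def by blast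
  let ?xs = "x # replicate (m-1) z"
  have R: "nary_reproducible m f N" using assms(4) unfolding subhypermodule_def by blast
  have L: "length ?xs = m" using assms(3) by simp
  have st: "set ?xs \<subseteq> N" using assms(5) zN by (auto simp: set_replicate_conv_if)
  have i1: "1 < m" using assms(3) by simp
  have "hlift f ((sgl ?xs)[1:=N]) = N" using R L st i1
    unfolding nary_reproducible_def by blast
  hence "z \<in> hlift f ((sgl ?xs)[1:=N])" using zN by simp
  moreover have "1 < length ?xs" using L i1 by simp
  ultimately obtain y where y: "y \<in> N" "z \<in> f (?xs[1:=y])" using hlift_upd[of 1 ?xs] by blast
  have "?xs[1:=y] = x # y # replicate (m-2) z" using assms(3)
  proof -
    obtain k where "m = Suc (Suc k)" using assms(3) by (metis add_2_eq_Suc le_Suc_ex)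
    thus ?thesis by simp
  qed
  hence "y = hinv m f z x" using inv_prop(2)[OF can] y by simp
  thus ?thesis using y by simp
qed

lemma univ_rep:
  assumes "canonical_hypergroup m f z" "length xs = m" "i < m"
  shows "\<exists>y. a \<in> f (xs[i:=y])"
proof -
  have "nary_reproducible m f UNIV" using assms(1)
    unfolding canonical_hypergroup_def nary_hypergroup_def by blast
  hence "hlift f ((sgl xs)[i:=UNIV]) = UNIV" using assms(2,3)
    unfolding nary_reproducible_def by blast
  hence "a \<in> hlift f ((sgl xs)[i:=UNIV])" by simp
  thus ?thesis using hlift_upd[of i xs] assms by auto
qed

lemma preimage_list:
  assumes "set xs \<subseteq> h ` Q"
  shows "\<exists>ys. set ys \<subseteq> Q \<and> map h ys = xs"
  using assms
proof (induction xs)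
  case Nil thus ?case by simp
next
  case (Cons x xs)
  then obtain ys where "set ys \<subseteq> Q" "map h ys = xs" by auto
  moreover obtain q where "q \<in> Q" "h q = x" using Cons.prems by auto
  ultimately show ?case by (intro exI[of _ "q # ys"]) auto
qed

theorem mainTheorem13:
  fixes m n :: nat
    and f' :: "'r list \<Rightarrow> 'r set" and g' :: "'r list \<Rightarrow> 'r" and z' one :: 'r
    and f1 :: "'a list \<Rightarrow> 'a set" and g1 :: "'r list \<Rightarrow> 'a \<Rightarrow> 'a set" and z1 :: 'a
    and f2 :: "'b list \<Rightarrow> 'b set" and g2 :: "'r list \<Rightarrow> 'b \<Rightarrow> 'b set" and z2 :: 'b
    and h :: "'a \<Rightarrow> 'b"
    and \<phi>1 :: "'a set \<Rightarrow> 'a set" and \<phi>2 :: "'b set \<Rightarrow> 'b set"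
  assumes "m \<ge> 2" and "n \<ge> 2"
    and "krasner_hyperring m n f' g' z' one"
    and "hypermodule m n f' g' z' one f1 g1 z1"
    and "hypermodule m n f' g' z' one f2 g2 z2"
    and "hm_epimorphism m n f1 g1 f2 g2 h"
    and "phi_function m n f1 g1 \<phi>1"
    and "phi_function m n f2 g2 \<phi>2"
  shows "(\<forall>Q2. phi_classical_prime m n one f2 g2 \<phi>2 Q2 \<and> \<phi>1 (h -` Q2) = h -` (\<phi>2 Q2)
              \<longrightarrow> phi_classical_prime m n one f1 g1 \<phi>1 (h -` Q2))
       \<and> (\<forall>Q1. phi_classical_prime m n one f1 g1 \<phi>1 Q1 \<and> Ker h z2 \<subseteq> Q1
              \<and> \<phi>2 (h ` Q1) = h ` (\<phi>1 Q1)
              \<longrightarrow> phi_classical_prime m n one f2 g2 \<phi>2 (h ` Q1))"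
proof -
  note M1 = assms(4) and M2 = assms(5)
  have can1: "canonical_hypergroup m f1 z1" using M1 unfolding hypermodule_def by blast
  have can2: "canonical_hypergroup m f2 z2" using M2 unfolding hypermodule_def by blast
  have surj: "surj h" using assms(6) unfolding hm_epimorphism_def by blast
  have hf: "\<And>xs. length xs = m \<Longrightarrow> h ` f1 xs = f2 (map h xs)"
    using assms(6) unfolding hm_epimorphism_def hm_homomorphism_def by blast
  have hg: "\<And>rs a. length rs = n - 1 \<Longrightarrow> h ` g1 rs a = g2 rs (h a)"
    using assms(6) unfolding hm_epimorphism_def hm_homomorphism_def by blast
  have hz: "h z1 = z2"
  proof -
    have "h ` g1 (replicate (n-1) z') z1 = g2 (replicate (n-1) z') (h z1)" by (rule hg) simp
    thus ?thesis using g_zero[OF M1 assms(2)] g_zero[OF M2 assms(2)] by simp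
  qed
  have hinv: "\<And>x. h (hinv m f1 z1 x) = hinv m f2 z2 (h x)"
  proof -
    fix x
    have "z1 \<in> f1 (x # hinv m f1 z1 x # replicate (m-2) z1)" by (rule inv_prop(1)[OF can1])
    hence "h z1 \<in> h ` f1 (x # hinv m f1 z1 x # replicate (m-2) z1)" by blast
    also have "\<dots> = f2 (map h (x # hinv m f1 z1 x # replicate (m-2) z1))"
      by (rule hf) (use assms(1) in simp)
    finally have "z2 \<in> f2 (h x # h (hinv m f1 z1 x) # replicate (m-2) z2)" using hz by simp
    thus "h (hinv m f1 z1 x) = hinv m f2 z2 (h x)" by (rule inv_prop(2)[OF can2])
  qed
  have part1: "phi_classical_prime m n one f1 g1 \<phi>1 (h -` Q2)"
    if P: "phi_classical_prime m n one f2 g2 \<phi>2 Q2" and E: "\<phi>1 (h -` Q2) = h -` (\<phi>2 Q2)" for Q2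
  proof -
    let ?H = "h -` Q2"
    have S2: "subhypermodule m n f2 g2 Q2" using P unfolding phi_classical_prime_def by blast
    have f2cl: "\<forall>xs. length xs = m \<longrightarrow> set xs \<subseteq> Q2 \<longrightarrow> f2 xs \<subseteq> Q2"
      using S2 unfolding subhypermodule_def by blast
    have inv2: "\<forall>x\<in>Q2. hinv m f2 z2 x \<in> Q2" using inv_in[OF M2 assms(2,1) S2] by blast
    have ne: "?H \<noteq> {}"
    proof -
      obtain q where q: "q \<in> Q2" using S2 unfolding subhypermodule_def by blast
      obtain x where "q = h x" using surj by (metis surjD)
      thus ?thesis using q by blast
    qed
    have f1cl: "\<forall>xs. length xs = m \<longrightarrow> set xs \<subseteq> ?H \<longrightarrow> f1 xs \<subseteq> ?H"
    proof (intro allI impI)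
      fix xs :: "'a list" assume L: "length xs = m" and s: "set xs \<subseteq> ?H"
      have "h ` f1 xs = f2 (map h xs)" using hf L by blast
      also have "\<dots> \<subseteq> Q2"
      proof -
        have "set (map h xs) \<subseteq> Q2" using s by auto
        thus ?thesis using f2cl[rule_format, of "map h xs"] L by simp
      qed
      finally show "f1 xs \<subseteq> ?H" by blast
    qed
    have rep: "nary_reproducible m f1 ?H"
      unfolding nary_reproducible_def
    proof (intro allI impI)
      fix xs :: "'a list" and i assume L: "length xs = m" and s: "set xs \<subseteq> ?H" and i: "i < m"
      show "hlift f1 ((sgl xs)[i := ?H]) = ?H"
      proof (rule set_eqI)
        fix a
        show "a \<in> hlift f1 ((sgl xs)[i := ?H]) \<longleftrightarrow> a \<in> ?H"
        proof
          assume "a \<in> hlift f1 ((sgl xs)[i := ?H])"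
          then obtain y where "y \<in> ?H" "a \<in> f1 (xs[i:=y])" using hlift_upd[of i xs] L i by auto
          moreover have "set (xs[i:=y]) \<subseteq> ?H" using s \<open>y \<in> ?H\<close> using set_update_subset_insert[of xs i y] by blast
          ultimately show "a \<in> ?H" using f1cl[rule_format, of "xs[i:=y]"] L by auto
        next
          assume aH: "a \<in> ?H"
          obtain y where y: "a \<in> f1 (xs[i:=y])" using univ_rep[OF can1 L i] by blast
          have "h a \<in> h ` f1 (xs[i:=y])" using y by blast
          also have "\<dots> = f2 (map h (xs[i:=y]))" by (rule hf) (simp add: L)
          finally have ha: "h a \<in> f2 ((map h xs)[i := h y])" by (simp add: map_update)
          have "set (take i ((map h xs)[i := h y]) @ drop (Suc i) ((map h xs)[i := h y])) \<subseteq> Q2"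
          proof -
            have "set (take i ((map h xs)[i := h y]) @ drop (Suc i) ((map h xs)[i := h y]))
                \<subseteq> set (map h xs)" by (auto dest: in_set_takeD in_set_dropD)
            thus ?thesis using s by auto
          qed
          hence "((map h xs)[i := h y]) ! i \<in> Q2"
            using cancel[OF can2 _ i ha _ _ f2cl inv2] L i aH by auto
          hence "y \<in> ?H" using L i by simp
          thus "a \<in> hlift f1 ((sgl xs)[i := ?H])" using hlift_upd[of i xs] L i y by auto
        qed
      qed
    qed
    have g1cl: "\<forall>rs a. length rs = n - 1 \<longrightarrow> a \<in> ?H \<longrightarrow> g1 rs a \<subseteq> ?H"
    proof (intro allI impI)
      fix rs :: "'r list" and a assume L: "length rs = n - 1" and a: "a \<in> ?H"
      have "h ` g1 rs a = g2 rs (h a)" using hg L by blast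
      also have "\<dots> \<subseteq> Q2" using S2 L a unfolding subhypermodule_def by auto
      finally show "g1 rs a \<subseteq> ?H" by blast
    qed
    have S1: "subhypermodule m n f1 g1 ?H" unfolding subhypermodule_def using ne f1cl rep g1cl by blast
    have prp: "?H \<noteq> UNIV"
    proof -
      obtain q where q: "q \<notin> Q2" using P unfolding phi_classical_prime_def by blast
      obtain x where "q = h x" using surj by (metis surjD)
      thus ?thesis using q by blast
    qed
    have cp: "\<forall>rs a. length rs = n - 1 \<longrightarrow> g1 rs a \<subseteq> ?H - \<phi>1 ?H \<longrightarrow>
        (\<exists>i < n - 1. g1 ((rs ! i) # replicate (n-2) one) a \<subseteq> ?H)"
    proof (intro allI impI)
      fix rs :: "'r list" and a assume L: "length rs = n - 1" and sub: "g1 rs a \<subseteq> ?H - \<phi>1 ?H"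
      have "g2 rs (h a) = h ` g1 rs a" using hg[OF L] by simp
      also have "\<dots> \<subseteq> Q2 - \<phi>2 Q2" using sub E by auto
      finally obtain i where i: "i < n - 1" "g2 ((rs ! i) # replicate (n-2) one) (h a) \<subseteq> Q2"
        using P L unfolding phi_classical_prime_def by blast
      have "h ` g1 ((rs ! i) # replicate (n-2) one) a = g2 ((rs ! i) # replicate (n-2) one) (h a)"
        by (rule hg) (use assms(2) in simp)
      hence "g1 ((rs ! i) # replicate (n-2) one) a \<subseteq> ?H" using i by blast
      thus "\<exists>i < n - 1. g1 ((rs ! i) # replicate (n-2) one) a \<subseteq> ?H" using i by blast
    qed
    show ?thesis unfolding phi_classical_prime_def using S1 prp cp by blast
  qed
  have part2: "phi_classical_prime m n one f2 g2 \<phi>2 (h ` Q1)"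
    if P: "phi_classical_prime m n one f1 g1 \<phi>1 Q1" and K: "Ker h z2 \<subseteq> Q1"
      and E: "\<phi>2 (h ` Q1) = h ` (\<phi>1 Q1)" for Q1
  proof -
    let ?H = "h ` Q1"
    have S1: "subhypermodule m n f1 g1 Q1" using P unfolding phi_classical_prime_def by blast
    have f1cl: "\<forall>xs. length xs = m \<longrightarrow> set xs \<subseteq> Q1 \<longrightarrow> f1 xs \<subseteq> Q1"
      using S1 unfolding subhypermodule_def by blast
    have inv1: "\<forall>x\<in>Q1. hinv m f1 z1 x \<in> Q1" using inv_in[OF M1 assms(2,1) S1] by blast
    have z1Q: "z1 \<in> Q1" using zero_in[OF M1 assms(2) S1] .
    have KK: "c \<in> Q1" if hc: "h c = h q" and q: "q \<in> Q1" for c q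
    proof -
      let ?ws = "c # hinv m f1 z1 q # replicate (m-2) z1"
      have L: "length ?ws = m" using assms(1) by simp
      have "z2 \<in> f2 (h q # hinv m f2 z2 (h q) # replicate (m-2) z2)" by (rule inv_prop(1)[OF can2])
      also have "h q # hinv m f2 z2 (h q) # replicate (m-2) z2 = map h ?ws" using hc hz hinv by simp
      also have "f2 (map h ?ws) = h ` f1 ?ws" using hf[OF L] by simp
      finally obtain d where d: "d \<in> f1 ?ws" "h d = z2" by blast
      hence dQ: "d \<in> Q1" using K unfolding Ker_def by blast
      have st: "set (take 0 ?ws @ drop (Suc 0) ?ws) \<subseteq> Q1" using inv1 q z1Q by auto
      have i0: "(0::nat) < m" using assms(1) by simp
      have "?ws ! 0 \<in> Q1" by (rule cancel[OF can1 L i0 d(1) dQ st f1cl inv1])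
      thus ?thesis by simp
    qed
    have ne: "?H \<noteq> {}" using S1 unfolding subhypermodule_def by blast
    have f2cl: "\<forall>xs. length xs = m \<longrightarrow> set xs \<subseteq> ?H \<longrightarrow> f2 xs \<subseteq> ?H"
    proof (intro allI impI)
      fix xs :: "'b list" assume L: "length xs = m" and s: "set xs \<subseteq> ?H"
      obtain ys where ys: "set ys \<subseteq> Q1" "map h ys = xs" using preimage_list[OF s] by blast
      have Ly: "length ys = m" using ys L by auto
      hence "f2 xs = h ` f1 ys" using hf[of ys] ys by simp
      also have "\<dots> \<subseteq> ?H" using f1cl[rule_format, OF Ly ys(1)] by blast
      finally show "f2 xs \<subseteq> ?H" .
    qed
    have rep: "nary_reproducible m f2 ?H"
      unfolding nary_reproducible_def
    proof (intro allI impI)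
      fix xs :: "'b list" and i assume L: "length xs = m" and s: "set xs \<subseteq> ?H" and i: "i < m"
      show "hlift f2 ((sgl xs)[i := ?H]) = ?H"
      proof (rule set_eqI)
        fix b
        show "b \<in> hlift f2 ((sgl xs)[i := ?H]) \<longleftrightarrow> b \<in> ?H"
        proof
          assume "b \<in> hlift f2 ((sgl xs)[i := ?H])"
          then obtain y where "y \<in> ?H" "b \<in> f2 (xs[i:=y])" using hlift_upd[of i xs] L i by auto
          moreover have "set (xs[i:=y]) \<subseteq> ?H" using s \<open>y \<in> ?H\<close> using set_update_subset_insert[of xs i y] by blast
          ultimately show "b \<in> ?H" using f2cl[rule_format, of "xs[i:=y]"] L by auto
        next
          assume "b \<in> ?H"
          then obtain a where a: "a \<in> Q1" "b = h a" by blast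
          obtain ys where ys: "set ys \<subseteq> Q1" "map h ys = xs" using preimage_list[OF s] by blast
          have Ly: "length ys = m" using ys L by auto
          have "hlift f1 ((sgl ys)[i := Q1]) = Q1" using S1 ys Ly i
            unfolding subhypermodule_def nary_reproducible_def by blast
          hence "a \<in> hlift f1 ((sgl ys)[i := Q1])" using a by simp
          moreover have "i < length ys" using Ly i by simp
          ultimately obtain y where y: "y \<in> Q1" "a \<in> f1 (ys[i:=y])" using hlift_upd[of i ys] by blast
          have "b \<in> h ` f1 (ys[i:=y])" using y a by blast
          also have "\<dots> = f2 (map h (ys[i:=y]))" by (rule hf) (simp add: Ly)
          also have "map h (ys[i:=y]) = xs[i := h y]" using ys by (simp add: map_update)
          finally show "b \<in> hlift f2 ((sgl xs)[i := ?H])" using hlift_upd[of i xs] L i y by auto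
        qed
      qed
    qed
    have g2cl: "\<forall>rs b. length rs = n - 1 \<longrightarrow> b \<in> ?H \<longrightarrow> g2 rs b \<subseteq> ?H"
    proof (intro allI impI)
      fix rs :: "'r list" and b assume L: "length rs = n - 1" and b: "b \<in> ?H"
      then obtain a where a: "a \<in> Q1" "b = h a" by blast
      have "g2 rs b = h ` g1 rs a" using hg[OF L] a by simp
      also have "\<dots> \<subseteq> ?H" using S1 L a unfolding subhypermodule_def by blast
      finally show "g2 rs b \<subseteq> ?H" .
    qed
    have S2: "subhypermodule m n f2 g2 ?H" unfolding subhypermodule_def using ne f2cl rep g2cl by blast
    have prp: "?H \<noteq> UNIV"
    proof
      assume U: "?H = UNIV"
      obtain x where "x \<notin> Q1" using P unfolding phi_classical_prime_def by blast
      moreover have "h x \<in> ?H" using U by simp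
      then obtain q where "q \<in> Q1" "h x = h q" by blast
      ultimately show False using KK by blast
    qed
    have cp: "\<forall>rs b. length rs = n - 1 \<longrightarrow> g2 rs b \<subseteq> ?H - \<phi>2 ?H \<longrightarrow>
        (\<exists>i < n - 1. g2 ((rs ! i) # replicate (n-2) one) b \<subseteq> ?H)"
    proof (intro allI impI)
      fix rs :: "'r list" and b assume L: "length rs = n - 1" and sub: "g2 rs b \<subseteq> ?H - \<phi>2 ?H"
      obtain a where a: "b = h a" using surj by (metis surjD)
      have "g1 rs a \<subseteq> Q1 - \<phi>1 Q1"
      proof
        fix c assume c: "c \<in> g1 rs a"
        hence "h c \<in> g2 rs b" using hg L a by blast
        hence hc: "h c \<in> ?H" "h c \<notin> h ` \<phi>1 Q1" using sub E by auto
        then obtain q where "q \<in> Q1" "h c = h q" by blast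
        hence "c \<in> Q1" using KK by blast
        moreover have "c \<notin> \<phi>1 Q1" using hc(2) by blast
        ultimately show "c \<in> Q1 - \<phi>1 Q1" by blast
      qed
      then obtain i where i: "i < n - 1" "g1 ((rs ! i) # replicate (n-2) one) a \<subseteq> Q1"
        using P L unfolding phi_classical_prime_def by blast
      have "h ` g1 ((rs ! i) # replicate (n-2) one) a = g2 ((rs ! i) # replicate (n-2) one) b"
        unfolding a by (rule hg) (use assms(2) in simp)
      hence "g2 ((rs ! i) # replicate (n-2) one) b \<subseteq> ?H" using i by blast
      thus "\<exists>i < n - 1. g2 ((rs ! i) # replicate (n-2) one) b \<subseteq> ?H" using i by blast
    qed
    show ?thesis unfolding phi_classical_prime_def using S2 prp cp by blast
  qed
  show ?thesis using part1 part2 by blast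
qed

end
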